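(* Consider a 1D convolutional layer mapping input sequences $w^{i-1}=(w^{i-1}_0,\dots,w^{i-1}_{N-1})$, $w^{i-1}_k\in\mathbb{R}^{c_{i-1}}$, to output sequences $w^i=(w^i_0,\dots,w^i_{N-1})$, $w^i_k\in\mathbb{R}^{c_i}$, via $$w^i_k=\phi_i\Big(b_i+\sum_{j=0}^{\ell_i-1}K^i_jw^{i-1}_{k-j}\Big),\qquad k=0,\dots,N-1,$$ with $w^{i-1}_m:=0$ for $m<0$, where $K^i_j\in\mathbb{R}^{c_i\times c_{i-1}}$, $b_i\in\mathbb{R}^{c_i}$, and $\phi_i(\nu)=(\varphi(\nu_1),\dots,\varphi(\nu_{c_i}))^\top$ with $\varphi:\mathbb{R}\to\mathbb{R}$ slope-restricted on $[0,1]$. Let $n_{x_i}=(\ell_i-1)c_{i-1}$ and let $$A_i=\begin{bmatrix}0&I\\0&0\end{bmatrix},\quad B_i=\begin{bmatrix}0\\ I\end{bmatrix},\quad C_i=\begin{bmatrix}K^i_{\ell_i-1}&\cdots&K^i_1\end{bmatrix},\quad D_i=K^i_0,$$ where $A_i\in\mathbb{R}^{n_{x_i}\times n_{x_i}}$ (the identity block of size $(\ell_i-2)c_{i-1}$) and $B_i\in\mathbb{R}^{n_{x_i}\times c_{i-1}}$ (identity block of size $c_{i-1}$), or let $(A_i,B_i,C_i,D_i)$ be replaced by $(EA_iE^{-1},EB_i,C_iE^{-1},D_i)$ for some invertible $E$. Let $\widetilde Q_i\in\mathbb{S}^{c_i}$, $\widetilde S_i\in\mathbb{R}^{c_i\times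 c_{i-1}}$, $\widetilde R_i\in\mathbb{S}^{c_{i-1}}$. If there exist a positive definite $P_i\in\mathbb{S}^{n_{x_i}}$ and a positive definite diagonal $\Lambda_i\in\mathbb{R}^{c_i\times c_i}$ such that $$\begin{bmatrix}P_i-A_i^\top P_iA_i & -A_i^\top P_iB_i & -C_i^\top\Lambda_i\\ -B_i^\top P_iA_i & \widetilde R_i-B_i^\top P_iB_i & \widetilde S_i^\top-D_i^\top\Lambda_i\\ -\Lambda_iC_i & \widetilde S_i-\Lambda_iD_i & 2\Lambda_i+\widetilde Q_i\end{bmatrix}\succeq 0,$$ then the layer is incrementally $(\widetilde Q_i,\widetilde S_i,\widetilde R_i)$-dissipative, i.e., for every $N\in\mathbb{N}_+$ and all input sequences $w^{i-1}_a,w^{i-1}_b$ of length $N$ with corresponding outputs $w^i_a,w^i_b$, writing $\Delta^i_{k}=w^i_{a,k}-w^i_{b,k}$ and $\Delta^{i-1}_{k}=w^{i-1}_{a,k}-w^{i-1}_{b,k}$, $$\sum_{k=0}^{N-1}\Big({\Delta^i_k}^\top\widetilde Q_i\Delta^i_k+2{\Delta^i_k}^\top\widetilde S_i\Delta^{i-1}_k+{\Delta^{i-1}_k}^\top\widetilde R_i\Delta^{i-1}_k\Big)\ge 0.$$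
   Context: $\mathbb{S}^n$ denotes the real symmetric $n\times n$ matrices. A function $\varphi:\mathbb{R}\to\mathbb{R}$ is slope-restricted on $[0,1]$ if $0\le\frac{\varphi(s)-\varphi(t)}{s-t}\le 1$ for all $s\ne t$. *)

theory Defs
  imports "Jordan_Normal_Form.Matrix"
begin

definition slope_restricted_01 :: "(real \<Rightarrow> real) \<Rightarrow> bool" where
  "slope_restricted_01 \<phi> \<longleftrightarrow>
     (\<forall>s t. s \<noteq> t \<longrightarrow> 0 \<le> (\<phi> s - \<phi> t) / (s - t) \<and> (\<phi> s - \<phi> t) / (s - t) \<le> 1)"

definition psd_mat :: "nat \<Rightarrow> real mat \<Rightarrow> bool" where
  "psd_mat n M \<longleftrightarrow> M \<in> carrier_mat n n \<and> transpose_mat M = M \<and>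
     (\<forall>x \<in> carrier_vec n. 0 \<le> x \<bullet> (M *\<^sub>v x))"

definition pd_mat :: "nat \<Rightarrow> real mat \<Rightarrow> bool" where
  "pd_mat n M \<longleftrightarrow> M \<in> carrier_mat n n \<and> transpose_mat M = M \<and>
     (\<forall>x \<in> carrier_vec n. x \<noteq> 0\<^sub>v n \<longrightarrow> 0 < x \<bullet> (M *\<^sub>v x))"

definition sym_mat :: "nat \<Rightarrow> real mat \<Rightarrow> bool" where
  "sym_mat n M \<longleftrightarrow> M \<in> carrier_mat n n \<and> transpose_mat M = M"

definition block3 :: "nat \<Rightarrow> nat \<Rightarrow> nat \<Rightarrow>
   real mat \<Rightarrow> real mat \<Rightarrow> real mat \<Rightarrow>
   real mat \<Rightarrow> real mat \<Rightarrow> real mat \<Rightarrow>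
   real mat \<Rightarrow> real mat \<Rightarrow> real mat \<Rightarrow> real mat" where
  "block3 n1 n2 n3 M11 M12 M13 M21 M22 M23 M31 M32 M33 =
     mat (n1+n2+n3) (n1+n2+n3) (\<lambda>(r,s).
       if r < n1 then
         (if s < n1 then M11 $$ (r,s) else if s < n1+n2 then M12 $$ (r, s-n1) else M13 $$ (r, s-n1-n2))
       else if r < n1+n2 then
         (if s < n1 then M21 $$ (r-n1,s) else if s < n1+n2 then M22 $$ (r-n1, s-n1) else M23 $$ (r-n1, s-n1-n2))
       else
         (if s < n1 then M31 $$ (r-n1-n2,s) else if s < n1+n2 then M32 $$ (r-n1-n2, s-n1) else M33 $$ (r-n1-n2, s-n1-n2)))"

text \<open>The 1D convolutional layer: input channels c0 (= c_{i-1}), output channels c1 (= c_i),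
  kernel length l, kernels K j (c1 x c0), bias b, activation phi applied componentwise;
  inputs with negative time index are zero.\<close>
definition conv_out :: "nat \<Rightarrow> nat \<Rightarrow> nat \<Rightarrow> (nat \<Rightarrow> real mat) \<Rightarrow> real vec \<Rightarrow> (real \<Rightarrow> real)
     \<Rightarrow> (nat \<Rightarrow> real vec) \<Rightarrow> nat \<Rightarrow> real vec" where
  "conv_out c0 c1 l K b \<phi> w k =
     map_vec \<phi> (b + vec c1 (\<lambda>r. \<Sum>j<l.
        (K j *\<^sub>v (if j \<le> k then w (k - j) else 0\<^sub>v c0)) $ r))"

definition conv_A :: "nat \<Rightarrow> nat \<Rightarrow> real mat" where
  "conv_A c0 l = mat ((l-1)*c0) ((l-1)*c0) (\<lambda>(r,s). if s = r + c0 then 1 else 0)"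

definition conv_B :: "nat \<Rightarrow> nat \<Rightarrow> real mat" where
  "conv_B c0 l = mat ((l-1)*c0) c0 (\<lambda>(r,s). if r = (l-2)*c0 + s then 1 else 0)"

text \<open>C = [K_{l-1} ... K_1]: column block q (q = 0..l-2) is K_{l-1-q}.\<close>
definition conv_C :: "nat \<Rightarrow> nat \<Rightarrow> nat \<Rightarrow> (nat \<Rightarrow> real mat) \<Rightarrow> real mat" where
  "conv_C c0 c1 l K = mat c1 ((l-1)*c0) (\<lambda>(r,s). K (l - 1 - s div c0) $$ (r, s mod c0))"

definition conv_D :: "(nat \<Rightarrow> real mat) \<Rightarrow> real mat" where
  "conv_D K = K 0"

end

theory Submission
  imports Defs
begin


lemma smult_mat_mult_vec':
  assumes "A \<in> carrier_mat nr nc" "v \<in> carrier_vec nc"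
  shows "((k::real) \<cdot>\<^sub>m A) *\<^sub>v v = k \<cdot>\<^sub>v (A *\<^sub>v v)"
  using assms by (intro eq_vecI) (auto simp: scalar_prod_def sum_distrib_left ac_simps)

lemma tr_sp:
  assumes "M \<in> carrier_mat n m" "x \<in> carrier_vec m" "u \<in> carrier_vec n"
  shows "x \<bullet> (transpose_mat M *\<^sub>v u) = (M *\<^sub>v x) \<bullet> (u::real vec)"
proof -
  have "x \<bullet> (transpose_mat M *\<^sub>v u) = (transpose_mat M *\<^sub>v u) \<bullet> x"
    using assms by (intro comm_scalar_prod[of _ m]) auto
  also have "\<dots> = u \<bullet> (M *\<^sub>v x)" using transpose_vec_mult_scalar assms by blast
  also have "\<dots> = (M *\<^sub>v x) \<bullet> u" using assms by (intro comm_scalar_prod[of _ n]) auto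
  finally show ?thesis .
qed

lemma sym_sp:
  assumes "M \<in> carrier_mat n n" "transpose_mat M = M" "x \<in> carrier_vec n" "u \<in> carrier_vec n"
  shows "x \<bullet> (M *\<^sub>v u) = u \<bullet> (M *\<^sub>v (x::real vec))"
  using tr_sp[OF assms(1,3,4)] assms comm_scalar_prod[of "M *\<^sub>v x" n u]
  by auto

lemma row_block3_1:
  assumes "r < n1" "M11 \<in> carrier_mat n1 n1" "M12 \<in> carrier_mat n1 n2" "M13 \<in> carrier_mat n1 n3"
  shows "row (block3 n1 n2 n3 M11 M12 M13 M21 M22 M23 M31 M32 M33) r = (row M11 r @\<^sub>v row M12 r) @\<^sub>v row M13 r"
  using assms by (intro eq_vecI) (auto simp: block3_def)

lemma row_block3_2:
  assumes "r < n2" "M21 \<in> carrier_mat n2 n1" "M22 \<in> carrier_mat n2 n2" "M23 \<in> carrier_mat n2 n3"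
  shows "row (block3 n1 n2 n3 M11 M12 M13 M21 M22 M23 M31 M32 M33) (n1 + r) = (row M21 r @\<^sub>v row M22 r) @\<^sub>v row M23 r"
  using assms by (intro eq_vecI) (auto simp: block3_def)

lemma row_block3_3:
  assumes "r < n3" "M31 \<in> carrier_mat n3 n1" "M32 \<in> carrier_mat n3 n2" "M33 \<in> carrier_mat n3 n3"
  shows "row (block3 n1 n2 n3 M11 M12 M13 M21 M22 M23 M31 M32 M33) (n1 + n2 + r) = (row M31 r @\<^sub>v row M32 r) @\<^sub>v row M33 r"
  using assms by (intro eq_vecI) (auto simp: block3_def)

lemma block3_carrier: "block3 n1 n2 n3 M11 M12 M13 M21 M22 M23 M31 M32 M33 \<in> carrier_mat (n1+n2+n3) (n1+n2+n3)"
  by (simp add: block3_def)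

lemma block3_mult_vec:
  assumes c: "M11 \<in> carrier_mat n1 n1" "M12 \<in> carrier_mat n1 n2" "M13 \<in> carrier_mat n1 n3"
    "M21 \<in> carrier_mat n2 n1" "M22 \<in> carrier_mat n2 n2" "M23 \<in> carrier_mat n2 n3"
    "M31 \<in> carrier_mat n3 n1" "M32 \<in> carrier_mat n3 n2" "M33 \<in> carrier_mat n3 n3"
    and v: "x \<in> carrier_vec n1" "w \<in> carrier_vec n2" "y \<in> carrier_vec (n3::nat)"
  shows "block3 n1 n2 n3 M11 M12 M13 M21 M22 M23 M31 M32 M33 *\<^sub>v ((x @\<^sub>v w) @\<^sub>v y) =
    ((M11 *\<^sub>v x + M12 *\<^sub>v w + M13 *\<^sub>v y) @\<^sub>v (M21 *\<^sub>v x + M22 *\<^sub>v w + M23 *\<^sub>v y))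
     @\<^sub>v (M31 *\<^sub>v x + M32 *\<^sub>v w + M33 *\<^sub>v (y :: real vec))"
proof (rule eq_vecI)
  let ?B = "block3 n1 n2 n3 M11 M12 M13 M21 M22 M23 M31 M32 M33"
  have dB: "dim_row ?B = n1+n2+n3" by (simp add: block3_def)
  show "dim_vec (?B *\<^sub>v ((x @\<^sub>v w) @\<^sub>v y)) = dim_vec (((M11 *\<^sub>v x + M12 *\<^sub>v w + M13 *\<^sub>v y) @\<^sub>v (M21 *\<^sub>v x + M22 *\<^sub>v w + M23 *\<^sub>v y))
     @\<^sub>v (M31 *\<^sub>v x + M32 *\<^sub>v w + M33 *\<^sub>v y))" using c dB by simp
  fix i assume "i < dim_vec (((M11 *\<^sub>v x + M12 *\<^sub>v w + M13 *\<^sub>v y) @\<^sub>v (M21 *\<^sub>v x + M22 *\<^sub>v w + M23 *\<^sub>v y))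
     @\<^sub>v (M31 *\<^sub>v x + M32 *\<^sub>v w + M33 *\<^sub>v y))"
  hence i: "i < n1+n2+n3" using c by simp
  consider "i < n1" | "n1 \<le> i" "i < n1 + n2" | "n1 + n2 \<le> i" by linarith
  then show "(?B *\<^sub>v ((x @\<^sub>v w) @\<^sub>v y)) $ i = (((M11 *\<^sub>v x + M12 *\<^sub>v w + M13 *\<^sub>v y) @\<^sub>v (M21 *\<^sub>v x + M22 *\<^sub>v w + M23 *\<^sub>v y))
     @\<^sub>v (M31 *\<^sub>v x + M32 *\<^sub>v w + M33 *\<^sub>v y)) $ i"
  proof cases
    case 1
    have "(?B *\<^sub>v ((x @\<^sub>v w) @\<^sub>v y)) $ i = ((row M11 i @\<^sub>v row M12 i) @\<^sub>v row M13 i) \<bullet> ((x @\<^sub>v w) @\<^sub>v y)"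
      using i dB row_block3_1[OF 1 c(1-3)] by simp
    also have "\<dots> = row M11 i \<bullet> x + row M12 i \<bullet> w + row M13 i \<bullet> y"
      using c v 1 by (simp add: scalar_prod_append[of _ "n1+n2" _ n3] scalar_prod_append[of _ n1 _ n2])
    finally show ?thesis using c v 1 by simp
  next
    case 2
    define r where "r = i - n1"
    have ir: "i = n1 + r" "r < n2" using 2 r_def by auto
    have "(?B *\<^sub>v ((x @\<^sub>v w) @\<^sub>v y)) $ i = ((row M21 r @\<^sub>v row M22 r) @\<^sub>v row M23 r) \<bullet> ((x @\<^sub>v w) @\<^sub>v y)"
      using i dB row_block3_2[OF ir(2) c(4-6)] ir by simp
    also have "\<dots> = row M21 r \<bullet> x + row M22 r \<bullet> w + row M23 r \<bullet> y"
      using c v ir by (simp add: scalar_prod_append[of _ "n1+n2" _ n3] scalar_prod_append[of _ n1 _ n2])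
    finally show ?thesis using c v ir by simp
  next
    case 3
    define r where "r = i - n1 - n2"
    have ir: "i = n1 + n2 + r" "r < n3" using 3 i r_def by auto
    have "(?B *\<^sub>v ((x @\<^sub>v w) @\<^sub>v y)) $ i = ((row M31 r @\<^sub>v row M32 r) @\<^sub>v row M33 r) \<bullet> ((x @\<^sub>v w) @\<^sub>v y)"
      using i dB row_block3_3[OF ir(2) c(7-9)] ir by simp
    also have "\<dots> = row M31 r \<bullet> x + row M32 r \<bullet> w + row M33 r \<bullet> y"
      using c v ir by (simp add: scalar_prod_append[of _ "n1+n2" _ n3] scalar_prod_append[of _ n1 _ n2])
    finally show ?thesis using c v ir by simp
  qed
qed

lemma sp3:
  assumes "a \<in> carrier_vec n" "p \<in> carrier_vec n" "q \<in> carrier_vec n" "s \<in> carrier_vec n"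
  shows "a \<bullet> (p + q + s) = a \<bullet> p + a \<bullet> q + a \<bullet> (s :: real vec)"
  using assms by (simp add: scalar_prod_add_distrib[of _ n])

lemma block3_qf:
  assumes c: "M11 \<in> carrier_mat n1 n1" "M12 \<in> carrier_mat n1 n2" "M13 \<in> carrier_mat n1 n3"
    "M21 \<in> carrier_mat n2 n1" "M22 \<in> carrier_mat n2 n2" "M23 \<in> carrier_mat n2 n3"
    "M31 \<in> carrier_mat n3 n1" "M32 \<in> carrier_mat n3 n2" "M33 \<in> carrier_mat n3 n3"
    and v: "x \<in> carrier_vec n1" "w \<in> carrier_vec n2" "y \<in> carrier_vec (n3::nat)"
  shows "((x @\<^sub>v w) @\<^sub>v y) \<bullet> (block3 n1 n2 n3 M11 M12 M13 M21 M22 M23 M31 M32 M33 *\<^sub>v ((x @\<^sub>v w) @\<^sub>v y)) =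
    x \<bullet> (M11 *\<^sub>v x) + x \<bullet> (M12 *\<^sub>v w) + x \<bullet> (M13 *\<^sub>v y) +
    w \<bullet> (M21 *\<^sub>v x) + w \<bullet> (M22 *\<^sub>v w) + w \<bullet> (M23 *\<^sub>v y) +
    y \<bullet> (M31 *\<^sub>v x) + y \<bullet> (M32 *\<^sub>v w) + y \<bullet> (M33 *\<^sub>v (y :: real vec))"
proof -
  have c1: "M11 *\<^sub>v x + M12 *\<^sub>v w + M13 *\<^sub>v y \<in> carrier_vec n1" by (meson add_carrier_vec mult_mat_vec_carrier c v)
  have c2: "M21 *\<^sub>v x + M22 *\<^sub>v w + M23 *\<^sub>v y \<in> carrier_vec n2" by (meson add_carrier_vec mult_mat_vec_carrier c v)
  have c3: "M31 *\<^sub>v x + M32 *\<^sub>v w + M33 *\<^sub>v y \<in> carrier_vec n3" by (meson add_carrier_vec mult_mat_vec_carrier c v)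
  have xw: "x @\<^sub>v w \<in> carrier_vec (n1+n2)" by (intro append_carrier_vec v)
  have u12: "(M11 *\<^sub>v x + M12 *\<^sub>v w + M13 *\<^sub>v y) @\<^sub>v (M21 *\<^sub>v x + M22 *\<^sub>v w + M23 *\<^sub>v y) \<in> carrier_vec (n1+n2)"
    by (intro append_carrier_vec c1 c2)
  show ?thesis
    unfolding block3_mult_vec[OF c v] scalar_prod_append[OF xw v(3) u12 c3] scalar_prod_append[OF v(1,2) c1 c2]
    sp3[OF v(1) mult_mat_vec_carrier[OF c(1) v(1)] mult_mat_vec_carrier[OF c(2) v(2)] mult_mat_vec_carrier[OF c(3) v(3)]]
    sp3[OF v(2) mult_mat_vec_carrier[OF c(4) v(1)] mult_mat_vec_carrier[OF c(5) v(2)] mult_mat_vec_carrier[OF c(6) v(3)]]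
    sp3[OF v(3) mult_mat_vec_carrier[OF c(7) v(1)] mult_mat_vec_carrier[OF c(8) v(2)] mult_mat_vec_carrier[OF c(9) v(3)]]
    by simp
qed

lemma assoc3:
  assumes "M1 \<in> carrier_mat n1 n2" "M2 \<in> carrier_mat n2 n3" "M3 \<in> carrier_mat n3 n4" "v \<in> carrier_vec n4"
  shows "(M1 * M2 * M3) *\<^sub>v v = M1 *\<^sub>v (M2 *\<^sub>v (M3 *\<^sub>v (v::real vec)))"
  unfolding assoc_mult_mat_vec[OF mult_carrier_mat[OF assms(1,2)] assms(3,4)]
  by (rule assoc_mult_mat_vec[OF assms(1,2) mult_mat_vec_carrier[OF assms(3,4)]])

lemma assoc2:
  assumes "M1 \<in> carrier_mat n1 n2" "M2 \<in> carrier_mat n2 n3" "v \<in> carrier_vec n3"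
  shows "(M1 * M2) *\<^sub>v v = M1 *\<^sub>v (M2 *\<^sub>v (v::real vec))"
  by (rule assoc_mult_mat_vec[OF assms])

lemma step_ineq:
  fixes A B C D P L Q S R :: "real mat"
  assumes cA: "A \<in> carrier_mat nx nx" and cB: "B \<in> carrier_mat nx c0"
    and cC: "C \<in> carrier_mat c1 nx" and cD: "D \<in> carrier_mat c1 c0"
    and cP: "P \<in> carrier_mat nx nx" and sP: "transpose_mat P = P"
    and cL: "L \<in> carrier_mat c1 c1" and sL: "transpose_mat L = L"
    and cQ: "Q \<in> carrier_mat c1 c1" and cS: "S \<in> carrier_mat c1 c0" and cR: "R \<in> carrier_mat c0 c0"
    and xi: "xi \<in> carrier_vec nx" and dw: "dw \<in> carrier_vec c0" and dy: "dy \<in> carrier_vec c1"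
    and psd: "psd_mat (nx + c0 + c1)
      (block3 nx c0 c1
        (P - transpose_mat A * P * A) (- (transpose_mat A * P * B)) (- (transpose_mat C * L))
        (- (transpose_mat B * P * A)) (R - transpose_mat B * P * B) (transpose_mat S - transpose_mat D * L)
        (- (L * C)) (S - L * D) (2 \<cdot>\<^sub>m L + Q))"
  shows "(A *\<^sub>v xi + B *\<^sub>v dw) \<bullet> (P *\<^sub>v (A *\<^sub>v xi + B *\<^sub>v dw)) - xi \<bullet> (P *\<^sub>v xi)
     + 2 * (dy \<bullet> (L *\<^sub>v (C *\<^sub>v xi + D *\<^sub>v dw)) - dy \<bullet> (L *\<^sub>v dy))
     \<le> dy \<bullet> (Q *\<^sub>v dy) + 2 * (dy \<bullet> (S *\<^sub>v dw)) + dw \<bullet> (R *\<^sub>v dw)"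
proof -
  define a where "a = A *\<^sub>v xi"
  define bb where "bb = B *\<^sub>v dw"
  define c where "c = C *\<^sub>v xi"
  define d where "d = D *\<^sub>v dw"
  have ca: "a \<in> carrier_vec nx" and cbb: "bb \<in> carrier_vec nx" and cc: "c \<in> carrier_vec c1"
    and cd: "d \<in> carrier_vec c1"
    using cA cB cC cD xi dw unfolding a_def bb_def c_def d_def by auto
  have z: "(xi @\<^sub>v dw) @\<^sub>v dy \<in> carrier_vec (nx + c0 + c1)" using xi dw dy by auto
  have "0 \<le> ((xi @\<^sub>v dw) @\<^sub>v dy) \<bullet> (block3 nx c0 c1
        (P - transpose_mat A * P * A) (- (transpose_mat A * P * B)) (- (transpose_mat C * L))
        (- (transpose_mat B * P * A)) (R - transpose_mat B * P * B) (transpose_mat S - transpose_mat D * L)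
        (- (L * C)) (S - L * D) (2 \<cdot>\<^sub>m L + Q) *\<^sub>v ((xi @\<^sub>v dw) @\<^sub>v dy))"
    using psd z unfolding psd_mat_def by blast
  also have "\<dots> = xi \<bullet> ((P - transpose_mat A * P * A) *\<^sub>v xi) + xi \<bullet> ((- (transpose_mat A * P * B)) *\<^sub>v dw)
     + xi \<bullet> ((- (transpose_mat C * L)) *\<^sub>v dy) +
    dw \<bullet> ((- (transpose_mat B * P * A)) *\<^sub>v xi) + dw \<bullet> ((R - transpose_mat B * P * B) *\<^sub>v dw)
     + dw \<bullet> ((transpose_mat S - transpose_mat D * L) *\<^sub>v dy) +
    dy \<bullet> ((- (L * C)) *\<^sub>v xi) + dy \<bullet> ((S - L * D) *\<^sub>v dw) + dy \<bullet> ((2 \<cdot>\<^sub>m L + Q) *\<^sub>v dy)"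
    by (rule block3_qf) (use cA cB cC cD cP cL cQ cS cR xi dw dy in auto)
  also have "xi \<bullet> ((P - transpose_mat A * P * A) *\<^sub>v xi) = xi \<bullet> (P *\<^sub>v xi) - a \<bullet> (P *\<^sub>v a)"
  proof -
    have "(P - transpose_mat A * P * A) *\<^sub>v xi = P *\<^sub>v xi - transpose_mat A *\<^sub>v (P *\<^sub>v a)"
      unfolding a_def minus_mult_distrib_mat_vec[OF cP mult_carrier_mat[OF mult_carrier_mat[OF transpose_carrier_mat[THEN iffD2, OF cA] cP] cA] xi]
        assoc3[OF transpose_carrier_mat[THEN iffD2, OF cA] cP cA xi] ..
    then show ?thesis using cA cP xi ca tr_sp[OF cA xi, of "P *\<^sub>v a"] unfolding a_def
      by (simp add: scalar_prod_minus_distrib[of _ nx])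
  qed
  also have "xi \<bullet> ((- (transpose_mat A * P * B)) *\<^sub>v dw) = - (a \<bullet> (P *\<^sub>v bb))"
    using cA cP cB xi dw tr_sp[OF cA xi, of "P *\<^sub>v bb"] unfolding a_def bb_def by (simp add: assoc3[of _ nx nx _ nx _ c0] del: assoc_mult_mat)
  also have "xi \<bullet> ((- (transpose_mat C * L)) *\<^sub>v dy) = - (c \<bullet> (L *\<^sub>v dy))"
    using cC cL xi dy tr_sp[OF cC xi, of "L *\<^sub>v dy"] unfolding c_def by (simp add: assoc2[of _ nx c1 _ c1])
  also have "dw \<bullet> ((- (transpose_mat B * P * A)) *\<^sub>v xi) = - (bb \<bullet> (P *\<^sub>v a))"
    using cA cP cB xi dw tr_sp[OF cB dw, of "P *\<^sub>v a"] unfolding a_def bb_def by (simp add: assoc3[of _ c0 nx _ nx _ nx] del: assoc_mult_mat)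
  also have "dw \<bullet> ((R - transpose_mat B * P * B) *\<^sub>v dw) = dw \<bullet> (R *\<^sub>v dw) - bb \<bullet> (P *\<^sub>v bb)"
  proof -
    have "(R - transpose_mat B * P * B) *\<^sub>v dw = R *\<^sub>v dw - transpose_mat B *\<^sub>v (P *\<^sub>v bb)"
      unfolding bb_def minus_mult_distrib_mat_vec[OF cR mult_carrier_mat[OF mult_carrier_mat[OF transpose_carrier_mat[THEN iffD2, OF cB] cP] cB] dw]
        assoc3[OF transpose_carrier_mat[THEN iffD2, OF cB] cP cB dw] ..
    then show ?thesis using cB cP cR dw cbb tr_sp[OF cB dw, of "P *\<^sub>v bb"] unfolding bb_def
      by (simp add: scalar_prod_minus_distrib[of _ c0])
  qed
  also have "dw \<bullet> ((transpose_mat S - transpose_mat D * L) *\<^sub>v dy) = dy \<bullet> (S *\<^sub>v dw) - d \<bullet> (L *\<^sub>v dy)"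
  proof -
    have "(transpose_mat S - transpose_mat D * L) *\<^sub>v dy = transpose_mat S *\<^sub>v dy - transpose_mat D *\<^sub>v (L *\<^sub>v dy)"
      using cS cD cL dy by (simp add: minus_mult_distrib_mat_vec[of _ c0 c1] assoc2[of _ c0 c1 _ c1])
    moreover have "dw \<bullet> (transpose_mat S *\<^sub>v dy) = dy \<bullet> (S *\<^sub>v dw)"
      using tr_sp[OF cS dw dy] comm_scalar_prod[of "S *\<^sub>v dw" c1 dy] cS dw dy by simp
    ultimately show ?thesis using cS cD cL dw dy tr_sp[OF cD dw, of "L *\<^sub>v dy"] unfolding d_def
      by (simp add: scalar_prod_minus_distrib[of _ c0])
  qed
  also have "dy \<bullet> ((- (L * C)) *\<^sub>v xi) = - (dy \<bullet> (L *\<^sub>v c))"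
    using cC cL xi dy unfolding c_def by (simp add: assoc2[of _ c1 c1 _ nx])
  also have "dy \<bullet> ((S - L * D) *\<^sub>v dw) = dy \<bullet> (S *\<^sub>v dw) - dy \<bullet> (L *\<^sub>v d)"
    using cS cD cL dw dy unfolding d_def
    by (simp add: minus_mult_distrib_mat_vec[of _ c1 c0] scalar_prod_minus_distrib[of _ c1] assoc2[of _ c1 c1 _ c0])
  also have "dy \<bullet> ((2 \<cdot>\<^sub>m L + Q) *\<^sub>v dy) = 2 * (dy \<bullet> (L *\<^sub>v dy)) + dy \<bullet> (Q *\<^sub>v dy)"
    using cL cQ dy
    by (simp add: add_mult_distrib_mat_vec[of _ c1 c1] scalar_prod_add_distrib[of _ c1] smult_mat_mult_vec'[of _ c1 c1])
  finally have main: "0 \<le> xi \<bullet> (P *\<^sub>v xi) - a \<bullet> (P *\<^sub>v a) + - (a \<bullet> (P *\<^sub>v bb)) + - (c \<bullet> (L *\<^sub>v dy)) +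
      - (bb \<bullet> (P *\<^sub>v a)) + (dw \<bullet> (R *\<^sub>v dw) - bb \<bullet> (P *\<^sub>v bb)) + (dy \<bullet> (S *\<^sub>v dw) - d \<bullet> (L *\<^sub>v dy)) +
      - (dy \<bullet> (L *\<^sub>v c)) + (dy \<bullet> (S *\<^sub>v dw) - dy \<bullet> (L *\<^sub>v d)) + (2 * (dy \<bullet> (L *\<^sub>v dy)) + dy \<bullet> (Q *\<^sub>v dy))" .
  have s1: "c \<bullet> (L *\<^sub>v dy) = dy \<bullet> (L *\<^sub>v c)" by (rule sym_sp[OF cL sL cc dy])
  have s2: "d \<bullet> (L *\<^sub>v dy) = dy \<bullet> (L *\<^sub>v d)" by (rule sym_sp[OF cL sL cd dy])
  have s3: "bb \<bullet> (P *\<^sub>v a) = a \<bullet> (P *\<^sub>v bb)" by (rule sym_sp[OF cP sP cbb ca])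
  have e1: "(a + bb) \<bullet> (P *\<^sub>v (a + bb)) = a \<bullet> (P *\<^sub>v a) + a \<bullet> (P *\<^sub>v bb) + bb \<bullet> (P *\<^sub>v a) + bb \<bullet> (P *\<^sub>v bb)"
    using ca cbb cP by (simp add: mult_add_distrib_mat_vec[of _ nx nx] scalar_prod_add_distrib[of _ nx]
        add_scalar_prod_distrib[of _ nx])
  have e2: "dy \<bullet> (L *\<^sub>v (c + d)) = dy \<bullet> (L *\<^sub>v c) + dy \<bullet> (L *\<^sub>v d)"
    using cc cd cL dy by (simp add: mult_add_distrib_mat_vec[of _ c1 c1] scalar_prod_add_distrib[of _ c1])
  show ?thesis unfolding a_def[symmetric] bb_def[symmetric] c_def[symmetric] d_def[symmetric] e1 e2
    using main unfolding s1 s2 s3 by argo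
qed



lemma sum_blocks: fixes m n :: nat shows "(\<Sum>s<m*n. f s) = (\<Sum>q<m. \<Sum>i<n. f (q*n+i) :: real)"
proof (induction m)
  case 0 then show ?case by simp
next
  case (Suc m)
  have u: "{..<Suc m * n} = {..<m*n} \<union> {m*n..<m*n+n}" by auto
  have "(\<Sum>s<Suc m*n. f s) = (\<Sum>s<m*n. f s) + (\<Sum>s\<in>{m*n..<m*n+n}. f s)"
    unfolding u by (rule sum.union_disjoint) auto
  also have "(\<Sum>s\<in>{m*n..<m*n+n}. f s) = (\<Sum>i<n. f (m*n+i))"
    using sum.shift_bounds_nat_ivl[of f 0 "m*n" n] by (simp add: atLeast0LessThan add.commute)
  finally show ?case using Suc by simp
qed

definition Xs :: "nat \<Rightarrow> nat \<Rightarrow> (nat \<Rightarrow> real vec) \<Rightarrow> nat \<Rightarrow> real vec" where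
  "Xs c0 l d k = vec ((l-1)*c0) (\<lambda>r. if l \<le> k + r div c0 + 1 then d (k + r div c0 + 1 - l) $ (r mod c0) else 0)"

lemma Xs_carrier: "Xs c0 l d k \<in> carrier_vec ((l-1)*c0)" by (simp add: Xs_def)

lemma Xs_0: "Xs c0 l d 0 = 0\<^sub>v ((l-1)*c0)"
proof (rule eq_vecI)
  fix r assume "r < dim_vec (0\<^sub>v ((l-1)*c0))"
  hence r: "r < (l-1)*c0" by simp
  hence "r div c0 < l - 1" by (simp add: less_mult_imp_div_less)
  thus "Xs c0 l d 0 $ r = 0\<^sub>v ((l-1)*c0) $ r" using r by (simp add: Xs_def)
qed (simp add: Xs_def)

lemma shift_step:
  assumes l: "1 \<le> l" and dk: "d k \<in> carrier_vec c0"
  shows "conv_A c0 l *\<^sub>v Xs c0 l d k + conv_B c0 l *\<^sub>v d k = Xs c0 l d (Suc k)"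
proof (rule eq_vecI)
  fix r assume "r < dim_vec (Xs c0 l d (Suc k))"
  hence r: "r < (l-1)*c0" by (simp add: Xs_def)
  then have c0: "0 < c0" by (cases c0) auto
  define q where "q = r div c0"
  define i where "i = r mod c0"
  have ri: "r = q*c0 + i" "i < c0" using c0 unfolding q_def i_def by auto
  have ql: "q < l - 1" using r unfolding q_def by (simp add: less_mult_imp_div_less)
  have eA: "(conv_A c0 l *\<^sub>v Xs c0 l d k) $ r = (if r + c0 < (l-1)*c0 then Xs c0 l d k $ (r + c0) else 0)"
  proof -
    have "(conv_A c0 l *\<^sub>v Xs c0 l d k) $ r = (\<Sum>s\<in>{0..<(l-1)*c0}. (if s = r + c0 then 1 else 0) * Xs c0 l d k $ s)"
      using r by (simp add: conv_A_def scalar_prod_def Xs_def)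
    also have "\<dots> = (\<Sum>s\<in>{0..<(l-1)*c0}. if s = r + c0 then Xs c0 l d k $ s else 0)"
      by (rule sum.cong) auto
    finally show ?thesis by (simp add: sum.delta)
  qed
  have eB: "(conv_B c0 l *\<^sub>v d k) $ r = (if (l-2)*c0 \<le> r then d k $ (r - (l-2)*c0) else 0)"
  proof -
    have "(conv_B c0 l *\<^sub>v d k) $ r = (\<Sum>s\<in>{0..<c0}. (if s = r - (l-2)*c0 \<and> (l-2)*c0 \<le> r then 1 else 0) * d k $ s)"
      using r dk by (auto simp: conv_B_def scalar_prod_def intro!: sum.cong)
    also have "\<dots> = (\<Sum>s\<in>{0..<c0}. if s = r - (l-2)*c0 then (if (l-2)*c0 \<le> r then d k $ s else 0) else 0)"
      by (rule sum.cong) auto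
    also have "\<dots> = (if (l-2)*c0 \<le> r then d k $ (r - (l-2)*c0) else 0)"
    proof -
      have "l \<ge> 2" using r by (cases "l - 1") auto
      then obtain m where "l = Suc (Suc m)" by (metis add_2_eq_Suc le_Suc_ex)
      hence "(l-2)*c0 \<le> r \<Longrightarrow> r - (l-2)*c0 < c0" using r by auto
      then show ?thesis by (simp add: sum.delta)
    qed
    finally show ?thesis .
  qed
  have lhs_dim: "dim_vec (conv_A c0 l *\<^sub>v Xs c0 l d k) = (l-1)*c0" by (simp add: conv_A_def)
  have lhs_dimB: "dim_vec (conv_B c0 l *\<^sub>v d k) = (l-1)*c0" by (simp add: conv_B_def)
  show "(conv_A c0 l *\<^sub>v Xs c0 l d k + conv_B c0 l *\<^sub>v d k) $ r = Xs c0 l d (Suc k) $ r"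
  proof (cases "q + 2 \<le> l - 1 + 0")
    case True
    have "r + c0 < (l-1)*c0"
    proof -
      have "r + c0 = (q+1)*c0 + i" using ri by simp
      also have "\<dots> < (q+2)*c0" using ri by simp
      also have "\<dots> \<le> (l-1)*c0" using True by (intro mult_right_mono) auto
      finally show ?thesis .
    qed
    moreover have "\<not> (l-2)*c0 \<le> r"
    proof -
      have "r < (q+1)*c0" using ri by simp
      also have "\<dots> \<le> (l-2)*c0" using True by (intro mult_right_mono) auto
      finally show ?thesis by simp
    qed
    moreover have "(r + c0) div c0 = q + 1" "(r + c0) mod c0 = i" using ri c0 by auto
    ultimately show ?thesis using r lhs_dim lhs_dimB eA eB ri c0
      by (simp add: Xs_def q_def[symmetric] i_def[symmetric])
  next
    case False
    hence qq: "q = l - 2" using ql by linarith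
    have "\<not> r + c0 < (l-1)*c0"
    proof -
      have "l - 1 = q + 1" using qq ql by arith
      hence "(l-1)*c0 = (q+1)*c0" by simp
      thus ?thesis using ri by simp
    qed
    moreover have "(l-2)*c0 \<le> r" "r - (l-2)*c0 = i" using ri qq by auto
    moreover have "l \<le> Suc k + q + 1" "Suc k + q + 1 - l = k" using qq ql by auto
    ultimately show ?thesis using r lhs_dim lhs_dimB eA eB ri c0
      by (simp add: Xs_def q_def[symmetric] i_def[symmetric])
  qed
qed (simp add: Xs_def conv_A_def conv_B_def)

lemma C_step:
  assumes l: "1 \<le> l" and K: "\<And>j. j < l \<Longrightarrow> K j \<in> carrier_mat c1 c0"
    and d: "\<And>m. m \<le> k \<Longrightarrow> d m \<in> carrier_vec c0"
  shows "conv_C c0 c1 l K *\<^sub>v Xs c0 l d k + K 0 *\<^sub>v d k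
     = vec c1 (\<lambda>r. \<Sum>j<l. (K j *\<^sub>v (if j \<le> k then d (k - j) else 0\<^sub>v c0)) $ r)"
proof -
  have K0: "K 0 \<in> carrier_mat c1 c0" using K l by auto
  show ?thesis
proof (rule eq_vecI)
  fix r assume "r < dim_vec (vec c1 (\<lambda>r. \<Sum>j<l. (K j *\<^sub>v (if j \<le> k then d (k - j) else 0\<^sub>v c0)) $ r))"
  hence r: "r < c1" by simp
  define h where "h j = (K j *\<^sub>v (if j \<le> k then d (k - j) else 0\<^sub>v c0)) $ r" for j
  have hj: "h j = (\<Sum>i<c0. K j $$ (r, i) * (if j \<le> k then d (k - j) $ i else 0))" if "j < l" for j
  proof -
    have v: "(if j \<le> k then d (k - j) else 0\<^sub>v c0) \<in> carrier_vec c0" using d by auto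
    have "h j = (\<Sum>i\<in>{0..<c0}. row (K j) r $ i * (if j \<le> k then d (k - j) else 0\<^sub>v c0) $ i)"
      unfolding h_def using K[OF that] r v by (simp add: scalar_prod_def)
    also have "\<dots> = (\<Sum>i<c0. K j $$ (r, i) * (if j \<le> k then d (k - j) $ i else 0))"
      using K[OF that] r by (auto simp: atLeast0LessThan intro!: sum.cong)
    finally show ?thesis .
  qed
  have "(conv_C c0 c1 l K *\<^sub>v Xs c0 l d k) $ r
      = (\<Sum>s\<in>{0..<(l-1)*c0}. K (l - 1 - s div c0) $$ (r, s mod c0) * Xs c0 l d k $ s)"
    using r by (simp add: conv_C_def scalar_prod_def Xs_def)
  also have "\<dots> = (\<Sum>q<l-1. \<Sum>i<c0. K (l - 1 - (q*c0+i) div c0) $$ (r, (q*c0+i) mod c0) * Xs c0 l d k $ (q*c0+i))"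
    unfolding atLeast0LessThan by (rule sum_blocks)
  also have "\<dots> = (\<Sum>q<l-1. h (l - 1 - q))"
  proof (rule sum.cong[OF refl])
    fix q assume q: "q \<in> {..<l-1}"
    have "(\<Sum>i<c0. K (l - 1 - (q*c0+i) div c0) $$ (r, (q*c0+i) mod c0) * Xs c0 l d k $ (q*c0+i))
       = (\<Sum>i<c0. K (l - 1 - q) $$ (r, i) * (if l - 1 - q \<le> k then d (k - (l - 1 - q)) $ i else 0))"
    proof (rule sum.cong[OF refl])
      fix i assume i: "i \<in> {..<c0}"
      have qi: "q*c0+i < (l-1)*c0"
      proof -
        have "q*c0+i < (q+1)*c0" using i by simp
        also have "\<dots> \<le> (l-1)*c0" using q by (intro mult_right_mono) auto
        finally show ?thesis .
      qed
      have dm: "(q*c0+i) div c0 = q" "(q*c0+i) mod c0 = i" using i by auto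
      have e1: "(l \<le> k + q + 1) = (l - 1 - q \<le> k)" using q by auto
      have e2: "k + q + 1 - l = k - (l - 1 - q)" using q by auto
      show "K (l - 1 - (q*c0+i) div c0) $$ (r, (q*c0+i) mod c0) * Xs c0 l d k $ (q*c0+i)
         = K (l - 1 - q) $$ (r, i) * (if l - 1 - q \<le> k then d (k - (l - 1 - q)) $ i else 0)"
      proof -
        have "Xs c0 l d k $ (q*c0+i) = (if l \<le> k + (q*c0+i) div c0 + 1 then d (k + (q*c0+i) div c0 + 1 - l) $ ((q*c0+i) mod c0) else 0)"
          unfolding Xs_def using qi by (rule index_vec)
        also have "\<dots> = (if l - 1 - q \<le> k then d (k - (l - 1 - q)) $ i else 0)"
          unfolding dm e1 e2 ..
        finally show ?thesis unfolding dm by simp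
      qed
    qed
    also have "\<dots> = h (l - 1 - q)" using hj[of "l-1-q"] l by simp
    finally show "(\<Sum>i<c0. K (l - 1 - (q*c0+i) div c0) $$ (r, (q*c0+i) mod c0) * Xs c0 l d k $ (q*c0+i))
       = h (l - 1 - q)" .
  qed
  also have "\<dots> = (\<Sum>q<l-1. h (Suc q))"
  proof -
    have "(\<Sum>q<l-1. h (l - 1 - q)) = (\<Sum>q<l-1. (\<lambda>i. h (Suc i)) (l - 1 - Suc q))"
    proof (rule sum.cong[OF refl])
      fix q assume "q \<in> {..<l-1}"
      then have eq: "l - 1 - q = Suc (l - 1 - Suc q)" by auto
      show "h (l - 1 - q) = (\<lambda>i. h (Suc i)) (l - 1 - Suc q)" by (simp only: eq)
    qed
    also have "\<dots> = (\<Sum>q<l-1. h (Suc q))" by (rule sum.nat_diff_reindex)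
    finally show ?thesis .
  qed
  finally have eC: "(conv_C c0 c1 l K *\<^sub>v Xs c0 l d k) $ r = (\<Sum>q<l-1. h (Suc q))" .
  have e0: "(K 0 *\<^sub>v d k) $ r = h 0" unfolding h_def using K0 r by simp
  have "(\<Sum>j<l. h j) = h 0 + (\<Sum>q<l-1. h (Suc q))"
    using l sum.lessThan_Suc_shift[of h "l-1"] by simp
  moreover have "dim_vec (conv_C c0 c1 l K *\<^sub>v Xs c0 l d k) = c1" "dim_vec (K 0 *\<^sub>v d k) = c1"
    using K0 by (auto simp: conv_C_def)
  ultimately have "(conv_C c0 c1 l K *\<^sub>v Xs c0 l d k + K 0 *\<^sub>v d k) $ r = (\<Sum>j<l. h j)"
    using r eC e0 by simp
  also have "\<dots> = vec c1 (\<lambda>r. \<Sum>j<l. (K j *\<^sub>v (if j \<le> k then d (k - j) else 0\<^sub>v c0)) $ r) $ r"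
    unfolding h_def by (rule index_vec[OF r, symmetric])
  finally show "(conv_C c0 c1 l K *\<^sub>v Xs c0 l d k + K 0 *\<^sub>v d k) $ r
     = vec c1 (\<lambda>r. \<Sum>j<l. (K j *\<^sub>v (if j \<le> k then d (k - j) else 0\<^sub>v c0)) $ r) $ r" .
qed (use K0 in \<open>auto simp: conv_C_def\<close>)
qed



lemma idx_minus:
  fixes M :: "real mat"
  assumes M: "M \<in> carrier_mat n m" and a: "a \<in> carrier_vec m" and b: "b \<in> carrier_vec m" and r: "r < n"
  shows "(M *\<^sub>v a) $ r - (M *\<^sub>v b) $ r = (M *\<^sub>v (a - b)) $ (r::nat)"
  using assms by (simp, subst scalar_prod_minus_distrib[of "row M r" m]) auto

lemma slope_scalar:
  assumes "slope_restricted_01 \<phi>"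
  shows "0 \<le> (\<phi> u - \<phi> v) * ((u - v) - (\<phi> u - \<phi> v))"
proof (cases "u = v")
  case True then show ?thesis by simp
next
  case False
  define t where "t = (\<phi> u - \<phi> v) / (u - v)"
  have t: "0 \<le> t" "t \<le> 1" using assms False unfolding slope_restricted_01_def t_def by auto
  have e: "\<phi> u - \<phi> v = t * (u - v)" using False unfolding t_def by simp
  have "(\<phi> u - \<phi> v) * ((u - v) - (\<phi> u - \<phi> v)) = t * (1 - t) * (u - v)^2"
    unfolding e by (simp add: algebra_simps power2_eq_square)
  also have "\<dots> \<ge> 0" using t by simp
  finally show ?thesis .
qed

lemma diag_mult_vec:
  assumes L: "L \<in> carrier_mat n n" "diagonal_mat L" and v: "v \<in> carrier_vec n" and r: "r < n"
  shows "(L *\<^sub>v v) $ r = L $$ (r, r) * v $ r"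
proof -
  have "(L *\<^sub>v v) $ r = (\<Sum>s\<in>{0..<n}. L $$ (r, s) * v $ s)"
    using L r v by (simp add: scalar_prod_def)
  also have "\<dots> = (\<Sum>s\<in>{0..<n}. if s = r then L $$ (r, r) * v $ r else 0)"
    using L r unfolding diagonal_mat_def by (intro sum.cong) auto
  also have "\<dots> = L $$ (r, r) * v $ r" using r by simp
  finally show ?thesis .
qed

lemma diag_sym: assumes "L \<in> carrier_mat n n" "diagonal_mat L" shows "transpose_mat L = L"
  using assms unfolding diagonal_mat_def by (intro eq_matI) (auto, metis)

lemma slope_term:
  assumes slope: "slope_restricted_01 \<phi>"
    and L: "L \<in> carrier_mat n n" "diagonal_mat L" and Lpos: "\<And>r. r < n \<Longrightarrow> 0 < L $$ (r, r)"
    and b: "b \<in> carrier_vec n" and pa: "pa \<in> carrier_vec n" and pb: "pb \<in> carrier_vec n"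
  defines "dy \<equiv> map_vec \<phi> (b + pa) - map_vec \<phi> (b + pb)"
  shows "0 \<le> dy \<bullet> (L *\<^sub>v (pa - pb)) - dy \<bullet> (L *\<^sub>v dy)"
proof -
  have dy: "dy \<in> carrier_vec n" unfolding dy_def using b pa pb by auto
  have "dy \<bullet> (L *\<^sub>v (pa - pb)) - dy \<bullet> (L *\<^sub>v dy)
      = (\<Sum>r\<in>{0..<n}. dy $ r * (L $$ (r, r) * (pa - pb) $ r)) - (\<Sum>r\<in>{0..<n}. dy $ r * (L $$ (r, r) * dy $ r))"
  proof -
    have e1: "dy \<bullet> (L *\<^sub>v v) = (\<Sum>r\<in>{0..<n}. dy $ r * (L $$ (r, r) * v $ r))" if v: "v \<in> carrier_vec n" for v
      unfolding scalar_prod_def using L v by (intro sum.cong) (simp_all add: diag_mult_vec[OF L v] del: index_mult_mat_vec)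
    show ?thesis using e1[of "pa - pb"] e1[OF dy] pa pb by simp
  qed
  also have "\<dots> = (\<Sum>r\<in>{0..<n}. L $$ (r, r) * (dy $ r * ((pa $ r - pb $ r) - dy $ r)))"
    using pa pb by (simp add: sum_subtractf[symmetric] algebra_simps)
  also have "\<dots> \<ge> 0"
  proof (rule sum_nonneg)
    fix r assume r: "r \<in> {0..<n}"
    have "dy $ r = \<phi> (b $ r + pa $ r) - \<phi> (b $ r + pb $ r)"
      unfolding dy_def using r b pa pb by simp
    moreover have "pa $ r - pb $ r = (b $ r + pa $ r) - (b $ r + pb $ r)" by simp
    ultimately have "0 \<le> dy $ r * ((pa $ r - pb $ r) - dy $ r)"
      using slope_scalar[OF slope, of "b $ r + pa $ r" "b $ r + pb $ r"] by simp
    then show "0 \<le> L $$ (r, r) * (dy $ r * ((pa $ r - pb $ r) - dy $ r))"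
      using Lpos[of r] r by simp
  qed
  finally show ?thesis .
qed

theorem lemma4:
  fixes c0 c1 l :: nat
    and K :: "nat \<Rightarrow> real mat" and b :: "real vec" and \<phi> :: "real \<Rightarrow> real"
    and E Einv P \<Lambda> Qt St Rt :: "real mat"
  defines "nx \<equiv> (l - 1) * c0"
  defines "A \<equiv> E * conv_A c0 l * Einv"
      and "B \<equiv> E * conv_B c0 l"
      and "C \<equiv> conv_C c0 c1 l K * Einv"
      and "D \<equiv> conv_D K"
  assumes l_pos: "1 \<le> l"
    and K_dim: "\<And>j. j < l \<Longrightarrow> K j \<in> carrier_mat c1 c0"
    and b_dim: "b \<in> carrier_vec c1"
    and slope: "slope_restricted_01 \<phi>"
    and E_dim: "E \<in> carrier_mat nx nx" and Einv_dim: "Einv \<in> carrier_mat nx nx"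
    and E_inv: "E * Einv = 1\<^sub>m nx" "Einv * E = 1\<^sub>m nx"
    and Qt: "sym_mat c1 Qt" and St: "St \<in> carrier_mat c1 c0" and Rt: "sym_mat c0 Rt"
    and P_pd: "pd_mat nx P"
    and Lam_dim: "\<Lambda> \<in> carrier_mat c1 c1" and Lam_diag: "diagonal_mat \<Lambda>"
    and Lam_pos: "\<And>r. r < c1 \<Longrightarrow> 0 < \<Lambda> $$ (r, r)"
    and LMI: "psd_mat (nx + c0 + c1)
      (block3 nx c0 c1
        (P - transpose_mat A * P * A) (- (transpose_mat A * P * B)) (- (transpose_mat C * \<Lambda>))
        (- (transpose_mat B * P * A)) (Rt - transpose_mat B * P * B) (transpose_mat St - transpose_mat D * \<Lambda>)
        (- (\<Lambda> * C)) (St - \<Lambda> * D) (2 \<cdot>\<^sub>m \<Lambda> + Qt))"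
  shows "\<forall>N wa wb. 0 < N \<longrightarrow>
           (\<forall>k<N. wa k \<in> carrier_vec c0 \<and> wb k \<in> carrier_vec c0) \<longrightarrow>
           0 \<le> (\<Sum>k<N.
              let dout = conv_out c0 c1 l K b \<phi> wa k - conv_out c0 c1 l K b \<phi> wb k;
                  din = wa k - wb k
              in dout \<bullet> (Qt *\<^sub>v dout) + 2 * (dout \<bullet> (St *\<^sub>v din)) + din \<bullet> (Rt *\<^sub>v din))"
proof (intro allI impI)
  fix N :: nat and wa wb :: "nat \<Rightarrow> real vec"
  assume N: "0 < N" and w: "\<forall>k<N. wa k \<in> carrier_vec c0 \<and> wb k \<in> carrier_vec c0"
  define d where "d k = wa k - wb k" for k
  have dc: "d k \<in> carrier_vec c0" if "k < N" for k using w that unfolding d_def by auto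
  define X where "X k = Xs c0 l d k" for k
  define xi where "xi k = E *\<^sub>v X k" for k
  define V where "V k = xi k \<bullet> (P *\<^sub>v xi k)" for k
  define pre where "pre w k = vec c1 (\<lambda>r. \<Sum>j<l. (K j *\<^sub>v (if j \<le> k then w (k - j) else 0\<^sub>v c0)) $ r)" for w k
  have conv_eq: "conv_out c0 c1 l K b \<phi> w k = map_vec \<phi> (b + pre w k)" for w k
    unfolding conv_out_def pre_def ..
  have K0: "K 0 \<in> carrier_mat c1 c0" using K_dim l_pos by auto
  have cA0: "conv_A c0 l \<in> carrier_mat nx nx" unfolding conv_A_def nx_def by simp
  have cB0: "conv_B c0 l \<in> carrier_mat nx c0" unfolding conv_B_def nx_def by simp
  have cC0: "conv_C c0 c1 l K \<in> carrier_mat c1 nx" unfolding conv_C_def nx_def by simp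
  have cA: "A \<in> carrier_mat nx nx" unfolding A_def
    by (intro mult_carrier_mat[OF mult_carrier_mat[OF E_dim cA0] Einv_dim])
  have cB: "B \<in> carrier_mat nx c0" unfolding B_def by (intro mult_carrier_mat[OF E_dim cB0])
  have cC: "C \<in> carrier_mat c1 nx" unfolding C_def by (intro mult_carrier_mat[OF cC0 Einv_dim])
  have cD: "D \<in> carrier_mat c1 c0" unfolding D_def conv_D_def by (rule K0)
  have cP: "P \<in> carrier_mat nx nx" and sP: "transpose_mat P = P" using P_pd unfolding pd_mat_def by auto
  have sL: "transpose_mat \<Lambda> = \<Lambda>" by (rule diag_sym[OF Lam_dim Lam_diag])
  have cQ: "Qt \<in> carrier_mat c1 c1" using Qt unfolding sym_mat_def by auto
  have cR: "Rt \<in> carrier_mat c0 c0" using Rt unfolding sym_mat_def by auto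
  have Xc: "X k \<in> carrier_vec nx" for k unfolding X_def nx_def by (rule Xs_carrier)
  have xic: "xi k \<in> carrier_vec nx" for k unfolding xi_def using E_dim Xc by simp
  have EE: "Einv *\<^sub>v (E *\<^sub>v v) = v" if v: "v \<in> carrier_vec nx" for v
  proof -
    have "Einv *\<^sub>v (E *\<^sub>v v) = (Einv * E) *\<^sub>v v" using assoc_mult_mat_vec[OF Einv_dim E_dim v] by simp
    also have "\<dots> = v" using E_inv(2) v by simp
    finally show ?thesis .
  qed
  have xnext: "A *\<^sub>v xi k + B *\<^sub>v d k = xi (Suc k)" if k: "k < N" for k
  proof -
    have "A *\<^sub>v xi k = E *\<^sub>v (conv_A c0 l *\<^sub>v X k)"
      unfolding A_def xi_def assoc3[OF E_dim cA0 Einv_dim mult_mat_vec_carrier[OF E_dim Xc]] EE[OF Xc] ..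
    moreover have "B *\<^sub>v d k = E *\<^sub>v (conv_B c0 l *\<^sub>v d k)"
      unfolding B_def by (rule assoc2[OF E_dim cB0 dc[OF k]])
    ultimately have "A *\<^sub>v xi k + B *\<^sub>v d k = E *\<^sub>v (conv_A c0 l *\<^sub>v X k + conv_B c0 l *\<^sub>v d k)"
      using mult_add_distrib_mat_vec[OF E_dim mult_mat_vec_carrier[OF cA0 Xc] mult_mat_vec_carrier[OF cB0 dc[OF k]]]
      by simp
    also have "\<dots> = xi (Suc k)" unfolding xi_def X_def shift_step[OF l_pos, of d k, OF dc[OF k]] ..
    finally show ?thesis .
  qed
  have nu: "C *\<^sub>v xi k + D *\<^sub>v d k = pre d k" if k: "k < N" for k
  proof -
    have "C *\<^sub>v xi k = conv_C c0 c1 l K *\<^sub>v X k"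
      unfolding C_def xi_def assoc2[OF cC0 Einv_dim mult_mat_vec_carrier[OF E_dim Xc]] EE[OF Xc] ..
    moreover have "\<And>m. m \<le> k \<Longrightarrow> d m \<in> carrier_vec c0" using dc k by auto
    ultimately show ?thesis unfolding D_def conv_D_def pre_def X_def
      using C_step[OF l_pos K_dim, where k=k and d=d] by simp
  qed
  have pre_c: "pre w k \<in> carrier_vec c1" for w k unfolding pre_def by simp
  have pre_diff: "pre wa k - pre wb k = pre d k" if k: "k < N" for k
  proof (rule eq_vecI)
    fix r assume "r < dim_vec (pre d k)"
    hence r: "r < c1" unfolding pre_def by simp
    have "(\<Sum>j<l. (K j *\<^sub>v (if j \<le> k then wa (k - j) else 0\<^sub>v c0)) $ r) - (\<Sum>j<l. (K j *\<^sub>v (if j \<le> k then wb (k - j) else 0\<^sub>v c0)) $ r)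
       = (\<Sum>j<l. (K j *\<^sub>v (if j \<le> k then d (k - j) else 0\<^sub>v c0)) $ r)"
      unfolding sum_subtractf[symmetric]
    proof (rule sum.cong[OF refl])
      fix j assume j: "j \<in> {..<l}"
      have va: "(if j \<le> k then wa (k - j) else 0\<^sub>v c0) \<in> carrier_vec c0" using w k by auto
      have vb: "(if j \<le> k then wb (k - j) else 0\<^sub>v c0) \<in> carrier_vec c0" using w k by auto
      have vd: "(if j \<le> k then d (k - j) else 0\<^sub>v c0) = (if j \<le> k then wa (k - j) else 0\<^sub>v c0) - (if j \<le> k then wb (k - j) else 0\<^sub>v c0)"
        unfolding d_def by auto
      show "(K j *\<^sub>v (if j \<le> k then wa (k - j) else 0\<^sub>v c0)) $ r - (K j *\<^sub>v (if j \<le> k then wb (k - j) else 0\<^sub>v c0)) $ r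
         = (K j *\<^sub>v (if j \<le> k then d (k - j) else 0\<^sub>v c0)) $ r"
        unfolding vd by (rule idx_minus[OF K_dim va vb r]) (use j in auto)
    qed
    then show "(pre wa k - pre wb k) $ r = pre d k $ r" using r unfolding pre_def by simp
  qed (simp add: pre_def)
  define S where "S k = (let dout = conv_out c0 c1 l K b \<phi> wa k - conv_out c0 c1 l K b \<phi> wb k;
                  din = wa k - wb k
              in dout \<bullet> (Qt *\<^sub>v dout) + 2 * (dout \<bullet> (St *\<^sub>v din)) + din \<bullet> (Rt *\<^sub>v din))" for k
  have stepk: "V (Suc k) - V k \<le> S k" if k: "k < N" for k
  proof -
    define dy where "dy = conv_out c0 c1 l K b \<phi> wa k - conv_out c0 c1 l K b \<phi> wb k"
    have dy': "dy = map_vec \<phi> (b + pre wa k) - map_vec \<phi> (b + pre wb k)" unfolding dy_def conv_eq ..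
    have dyc: "dy \<in> carrier_vec c1" unfolding dy' using b_dim pre_c by auto
    have Sk: "S k = dy \<bullet> (Qt *\<^sub>v dy) + 2 * (dy \<bullet> (St *\<^sub>v d k)) + d k \<bullet> (Rt *\<^sub>v d k)"
      unfolding S_def dy_def d_def Let_def ..
    have st: "(A *\<^sub>v xi k + B *\<^sub>v d k) \<bullet> (P *\<^sub>v (A *\<^sub>v xi k + B *\<^sub>v d k)) - xi k \<bullet> (P *\<^sub>v xi k)
     + 2 * (dy \<bullet> (\<Lambda> *\<^sub>v (C *\<^sub>v xi k + D *\<^sub>v d k)) - dy \<bullet> (\<Lambda> *\<^sub>v dy))
     \<le> dy \<bullet> (Qt *\<^sub>v dy) + 2 * (dy \<bullet> (St *\<^sub>v d k)) + d k \<bullet> (Rt *\<^sub>v d k)"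
      by (rule step_ineq[OF cA cB cC cD cP sP Lam_dim sL cQ St cR xic dc[OF k] dyc LMI])
    have sl: "0 \<le> dy \<bullet> (\<Lambda> *\<^sub>v (pre wa k - pre wb k)) - dy \<bullet> (\<Lambda> *\<^sub>v dy)"
      unfolding dy' by (rule slope_term[OF slope Lam_dim Lam_diag Lam_pos b_dim pre_c pre_c])
    show ?thesis using st sl unfolding xnext[OF k] nu[OF k] pre_diff[OF k] Sk V_def by argo
  qed
  have "(\<Sum>k<N. V (Suc k) - V k) \<le> (\<Sum>k<N. S k)" by (rule sum_mono) (use stepk in auto)
  moreover have "(\<Sum>k<N. V (Suc k) - V k) = V N - V 0" by (rule sum_lessThan_telescope)
  moreover have "V 0 = 0"
  proof -
    have "X 0 = 0\<^sub>v nx" unfolding X_def nx_def by (rule Xs_0)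
    moreover have "E *\<^sub>v 0\<^sub>v nx = 0\<^sub>v nx" by (rule eq_vecI) (use E_dim in auto)
    ultimately have "xi 0 = 0\<^sub>v nx" unfolding xi_def by simp
    thus ?thesis unfolding V_def using cP by simp
  qed
  moreover have "0 \<le> V N"
  proof (cases "xi N = 0\<^sub>v nx")
    case True thus ?thesis unfolding V_def using cP by simp
  next
    case False thus ?thesis unfolding V_def using P_pd xic unfolding pd_mat_def by (meson less_imp_le)
  qed
  ultimately show "0 \<le> (\<Sum>k<N.
              let dout = conv_out c0 c1 l K b \<phi> wa k - conv_out c0 c1 l K b \<phi> wb k;
                  din = wa k - wb k
              in dout \<bullet> (Qt *\<^sub>v dout) + 2 * (dout \<bullet> (St *\<^sub>v din)) + din \<bullet> (Rt *\<^sub>v din))"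
    unfolding S_def[symmetric] by argo
qed

end
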